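(* Let $w:\mathbb{Z}\to\mathbb{R}$ be a weight with $w(n)\geq 1$ for all $n$ and $\sup_{n\in\mathbb{Z}}\big(|\tfrac{w(n+1)}{w(n)}|+|\tfrac{w(n)}{w(n+1)}|\big)<\infty$. Fix $1\leq p\leq\infty$ and let $\alpha_0,\beta_0,\tilde\alpha_0,\tilde\beta_0:\mathbb{Z}\to\mathbb{C}$ be bounded sequences such that \begin{itemize} \item if $1\leq p<\infty$: $\|(\alpha_0,\beta_0)\|_{w,2p}<\infty$, $\|(\alpha_0-\alpha_0^+,\beta_0-\beta_0^+)\|_{w,p}<\infty$, and $\|(\tilde\alpha_0,\tilde\beta_0)\|_{w,p}<\infty$; \item if $p=\infty$: $\|(\alpha_0,\beta_0)\|_{w,\infty}<\infty$, $\|(\alpha_0-\alpha_0^+,\beta_0-\beta_0^+)\|_{w^2,\infty}<\infty$, and $\|(\tilde\alpha_0,\tilde\beta_0)\|_{w^2,\infty}<\infty$. \end{itemize} Let $(\alpha(t),\beta(t))$, $t\in(-T,T)$, be the unique (local, bounded) solution of the Ablowitz--Ladik system \[ -i\alpha_t-(1-\alpha\beta)(\alpha^-+\alpha^+)+2\alpha=0,\qquad -i\beta_t+(1-\alpha\beta)(\beta^-+\beta^+)-2\beta=0 \] with initial conditions $\alpha(0)=\alpha_0+\tilde\alpha_0$, $\beta(0)=\beta_0+\tilde\beta_0$. Then this solution is of the form $\alpha(t)=\alpha_0+\tilde\alpha(t)$, $\beta(t)=\beta_0+\tilde\beta(t)$, where for all $t\in(-T,T)$ one has $\|(\tilde\alpha(t),\tilde\beta(t))\|_{w,p}<\infty$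 if $1\leq p<\infty$, respectively $\|(\tilde\alpha(t),\tilde\beta(t))\|_{w^2,\infty}<\infty$ if $p=\infty$.
   Context: Here $\alpha=\alpha(n,t)$, $\beta=\beta(n,t)$, $(n,t)\in\mathbb{Z}\times\mathbb{R}$, are complex-valued, and for a sequence $f$ we write $f^\pm(n)=f(n\pm1)$ (also $f^\pm(n,t)=f(n\pm1,t)$). For a weight $v:\mathbb{Z}\to[1,\infty)$ and pairs of sequences $(\alpha,\beta)$ define \[ \|(\alpha,\beta)\|_{v,p}=\Big(\sum_{n\in\mathbb{Z}} v(n)\big(|\alpha(n)|^p+|\beta(n)|^p\big)\Big)^{1/p}\ (1\leq p<\infty),\qquad \|(\alpha,\beta)\|_{v,\infty}=\sup_{n\in\mathbb{Z}} v(n)\big(|\alpha(n)|+|\beta(n)|\big). \] $w^2$ denotes the weight $n\mapsto w(n)^2$. $T>0$ denotes the length of the existence interval of the local solution of the initial value problem (solutions are $C^1$ in $t$ with values in bounded sequences). *)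

theory Defs
  imports "HOL-Analysis.Analysis"
begin

definition bounded_seq :: "(int \<Rightarrow> complex) \<Rightarrow> bool" where
  "bounded_seq a \<longleftrightarrow> bdd_above (range (\<lambda>n. norm (a n)))"

definition wnorm_p_finite :: "(int \<Rightarrow> real) \<Rightarrow> real \<Rightarrow> (int \<Rightarrow> complex) \<Rightarrow> (int \<Rightarrow> complex) \<Rightarrow> bool" where
  "wnorm_p_finite v p a b \<longleftrightarrow>
     (\<lambda>n. v n * (norm (a n) powr p + norm (b n) powr p)) summable_on UNIV"

definition wnorm_inf_finite :: "(int \<Rightarrow> real) \<Rightarrow> (int \<Rightarrow> complex) \<Rightarrow> (int \<Rightarrow> complex) \<Rightarrow> bool" where
  "wnorm_inf_finite v a b \<longleftrightarrow> bdd_above (range (\<lambda>n. v n * (norm (a n) + norm (b n))))"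

end

theory Submission
  imports Defs
begin

lemma mvt_rc:
  fixes f :: "real \<Rightarrow> 'b::real_normed_vector"
  assumes d: "\<And>r. r \<in> {a..b} \<Longrightarrow> (f has_vector_derivative f' r) (at r)"
    and bd: "\<And>r. r \<in> {a..b} \<Longrightarrow> norm (f' r) \<le> M"
    and x: "x \<in> {a..b}" and y: "y \<in> {a..b}"
  shows "norm (f x - f y) \<le> M * \<bar>x - y\<bar>"
proof -
  have "norm (f x - f y) \<le> M * norm (x - y)"
  proof (rule differentiable_bound[where f' = "\<lambda>r h. h *\<^sub>R f' r"])
    show "convex {a..b}" by simp
    fix r assume r: "r \<in> {a..b}"
    show "(f has_derivative (\<lambda>h. h *\<^sub>R f' r)) (at r within {a..b})"
      using d[OF r] unfolding has_vector_derivative_def by (rule has_derivative_at_withinI)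
    have "onorm (\<lambda>h::real. h *\<^sub>R f' r) = onorm (\<lambda>h::real. h) * norm (f' r)"
      by (rule onorm_scaleR_left) (rule bounded_linear_ident)
    also have "\<dots> = norm (f' r)" using onorm_id[where 'a=real] by (simp add: id_def)
    finally show "onorm (\<lambda>h. h *\<^sub>R f' r) \<le> M" using bd[OF r] by simp
  qed (use x y in auto)
  then show ?thesis by simp
qed

lemma bl_apply: "bounded_linear (\<lambda>f::('a::topological_space \<Rightarrow>\<^sub>C 'b::real_normed_vector). apply_bcontfun f n)"
  by (rule bounded_linear_intro[where K=1]) (auto intro: order_trans[OF norm_bounded])

lemma deriv_apply:
  assumes "(\<alpha> has_vector_derivative v) (at t)"
  shows "((\<lambda>s. apply_bcontfun (\<alpha> s) n) has_vector_derivative apply_bcontfun v n) (at t)"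
proof -
  have "((\<lambda>s. apply_bcontfun (\<alpha> s) n) has_derivative (\<lambda>h. apply_bcontfun (h *\<^sub>R v) n)) (at t)"
    using bounded_linear.has_derivative[OF bl_apply assms[unfolded has_vector_derivative_def]] .
  then show ?thesis unfolding has_vector_derivative_def by simp
qed

lemma sum_le_max5:
  fixes p :: real
  assumes "p \<ge> 1" "0\<le>x1" "0\<le>x2" "0\<le>x3" "0\<le>x4" "0\<le>x5"
  shows "(x1+x2+x3+x4+x5) powr p \<le> 5 powr p * (x1 powr p + x2 powr p + x3 powr p + x4 powr p + x5 powr p)"
proof -
  define m where "m = max x1 (max x2 (max x3 (max x4 x5)))"
  have m0: "0 \<le> m" using assms by (simp add: m_def)
  have "x1+x2+x3+x4+x5 \<le> 5 * m" unfolding m_def by linarith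
  hence "(x1+x2+x3+x4+x5) powr p \<le> (5*m) powr p" using assms by (intro powr_mono2) auto
  also have "\<dots> = 5 powr p * m powr p" using m0 by (simp add: powr_mult)
  also have "m powr p \<le> x1 powr p + x2 powr p + x3 powr p + x4 powr p + x5 powr p"
    unfolding m_def by (auto simp: max_def add_nonneg_nonneg)
  hence "5 powr p * m powr p \<le> 5 powr p * (x1 powr p + x2 powr p + x3 powr p + x4 powr p + x5 powr p)"
    by (intro mult_left_mono) auto
  finally show ?thesis .
qed

lemma sum_le_max2:
  fixes p :: real
  assumes "p \<ge> 1" "0\<le>x" "0\<le>y"
  shows "(x+y) powr p \<le> 2 powr p * (x powr p + y powr p)"
proof -
  define m where "m = max x y"
  have m0: "0 \<le> m" using assms by (simp add: m_def)
  have "x+y \<le> 2 * m" unfolding m_def by linarith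
  hence "(x+y) powr p \<le> (2*m) powr p" using assms by (intro powr_mono2) auto
  also have "\<dots> = 2 powr p * m powr p" using m0 by (simp add: powr_mult)
  also have "m powr p \<le> x powr p + y powr p"
    unfolding m_def by (auto simp: max_def)
  hence "2 powr p * m powr p \<le> 2 powr p * (x powr p + y powr p)"
    by (intro mult_left_mono) auto
  finally show ?thesis .
qed

lemma iterate_bound:
  fixes S :: "nat \<Rightarrow> real"
  assumes rec: "\<And>N. S N \<le> A + \<epsilon> * S (Suc N)"
    and S0: "\<And>N. 0 \<le> S N" and A0: "0 \<le> A" and e0: "0 \<le> \<epsilon>" and e1: "\<epsilon> \<le> 1/2"
    and gr: "\<And>N. S N \<le> D * Q ^ N" and eQ: "\<epsilon> * Q \<le> 1/2" and Q0: "0 \<le> Q"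
  shows "S N \<le> 2 * A"
proof -
  have claim: "\<forall>N. S N \<le> 2 * A + \<epsilon> ^ k * S (N + k)" for k
  proof (induction k)
    case 0 then show ?case by (simp add: A0)
  next
    case (Suc k)
    show ?case
    proof
      fix N
      have IH: "S (Suc N) \<le> 2 * A + \<epsilon> ^ k * S (Suc N + k)" using Suc.IH by blast
      have "S N \<le> A + \<epsilon> * S (Suc N)" by (rule rec)
      also have "\<epsilon> * S (Suc N) \<le> \<epsilon> * (2 * A + \<epsilon> ^ k * S (Suc N + k))"
        using IH e0 by (intro mult_left_mono) auto
      finally have "S N \<le> A + \<epsilon> * (2*A) + \<epsilon> ^ Suc k * S (N + Suc k)" by (simp add: algebra_simps)
      moreover have "\<epsilon> * (2*A) \<le> A" using mult_right_mono[OF e1, of "2*A"] A0 by simp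
      ultimately show "S N \<le> 2 * A + \<epsilon> ^ Suc k * S (N + Suc k)" by simp
    qed
  qed
  have D0: "0 \<le> D" using gr[of 0] S0[of 0] by simp
  have bnd: "S N \<le> 2 * A + D * Q ^ N * (1/2) ^ k" for k
  proof -
    have "\<epsilon> ^ k * S (N + k) \<le> \<epsilon> ^ k * (D * Q ^ (N + k))" using gr e0 by (intro mult_left_mono) auto
    also have "\<dots> = D * Q ^ N * (\<epsilon> * Q) ^ k" by (simp add: power_add power_mult_distrib)
    also have "\<dots> \<le> D * Q ^ N * (1/2) ^ k"
      using D0 Q0 e0 eQ by (intro mult_left_mono power_mono) auto
    finally show ?thesis using spec[OF claim[of k], of N] by linarith
  qed
  have "(\<lambda>k. 2 * A + D * Q ^ N * (1/2::real) ^ k) \<longlonglongrightarrow> 2 * A + D * Q ^ N * 0"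
    by (intro tendsto_intros) simp
  then show ?thesis using bnd by (intro LIMSEQ_le_const[where X="\<lambda>k. 2 * A + D * Q ^ N * (1/2::real) ^ k"]) auto
qed

lemma w_growth:
  fixes w :: "int \<Rightarrow> real"
  assumes "\<And>n. w (n+1) \<le> R * w n" "\<And>n. w n \<le> R * w (n+1)" "\<And>n. w n > 0" "R \<ge> 1"
  shows "w n \<le> w 0 * R ^ nat \<bar>n\<bar>"
proof -
  have "w (int k) \<le> w 0 * R ^ k \<and> w (- int k) \<le> w 0 * R ^ k" for k
  proof (induction k)
    case 0 then show ?case by simp
  next
    case (Suc k)
    have "w (int (Suc k)) \<le> R * w (int k)" using assms(1)[of "int k"] by (simp add: add.commute)
    also have "\<dots> \<le> R * (w 0 * R ^ k)" using Suc assms(4) by (intro mult_left_mono) auto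
    finally have 1: "w (int (Suc k)) \<le> w 0 * R ^ Suc k" by (simp add: algebra_simps)
    have "w (- int (Suc k)) \<le> R * w (- int k)" using assms(2)[of "- int (Suc k)"] by simp
    also have "\<dots> \<le> R * (w 0 * R ^ k)" using Suc assms(4) by (intro mult_left_mono) auto
    finally have 2: "w (- int (Suc k)) \<le> w 0 * R ^ Suc k" by (simp add: algebra_simps)
    show ?case using 1 2 by simp
  qed
  note that_k = this
  show ?thesis
  proof (cases "n \<ge> 0")
    case True
    then obtain k where "n = int k" using nonneg_eq_int by blast
    then show ?thesis using that_k[of k] by simp
  next
    case False
    have "n = - int (nat (-n))" using False by simp
    then obtain k where "n = - int k" by blast
    then show ?thesis using that_k[of k] by simp
  qed
qed

definition FinS :: "(int \<Rightarrow> real) \<Rightarrow> real \<Rightarrow> (int \<Rightarrow> real) \<Rightarrow> bool" where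
  "FinS w p x \<longleftrightarrow> (\<exists>A. \<forall>X. finite X \<longrightarrow> (\<Sum>n\<in>X. w n * x n powr p) \<le> A)"

definition FinI :: "(int \<Rightarrow> real) \<Rightarrow> (int \<Rightarrow> real) \<Rightarrow> bool" where
  "FinI v x \<longleftrightarrow> (\<exists>A. \<forall>n. v n * x n \<le> A)"

lemma finite_int_bounded:
  fixes X :: "int set"
  assumes "finite X"
  shows "\<exists>N::nat. X \<subseteq> {- int N..int N}"
  using assms
proof (induction X rule: finite_induct)
  case empty then show ?case by auto
next
  case (insert x F)
  then obtain N where "F \<subseteq> {- int N..int N}" by blast
  then have "\<forall>y\<in>F. - int N \<le> y \<and> y \<le> int N" by auto
  then have "\<forall>y\<in>insert x F. - int (max N (nat \<bar>x\<bar>)) \<le> y \<and> y \<le> int (max N (nat \<bar>x\<bar>))" by fastforce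
  then have "insert x F \<subseteq> {- int (max N (nat \<bar>x\<bar>))..int (max N (nat \<bar>x\<bar>))}" by auto
  then show ?case by blast
qed

lemma FinS_mono:
  assumes "FinS w p y" "\<And>n. 0 \<le> x n" "\<And>n. x n \<le> y n" "\<And>n. 0 \<le> w n" "p \<ge> 0"
  shows "FinS w p x"
proof -
  obtain A where A: "\<And>X. finite X \<Longrightarrow> (\<Sum>n\<in>X. w n * y n powr p) \<le> A" using assms(1) unfolding FinS_def by blast
  have "(\<Sum>n\<in>X. w n * x n powr p) \<le> A" if "finite X" for X
  proof -
    have "(\<Sum>n\<in>X. w n * x n powr p) \<le> (\<Sum>n\<in>X. w n * y n powr p)"
      using assms by (intro sum_mono mult_left_mono powr_mono2) auto
    then show ?thesis using A[OF that] by simp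
  qed
  then show ?thesis unfolding FinS_def by blast
qed

lemma FinS_add:
  assumes "FinS w p x" "FinS w p y" "\<And>n. 0 \<le> x n" "\<And>n. 0 \<le> y n" "\<And>n. 0 \<le> w n" "p \<ge> 1"
  shows "FinS w p (\<lambda>n. x n + y n)"
proof -
  obtain A where A: "\<And>X. finite X \<Longrightarrow> (\<Sum>n\<in>X. w n * x n powr p) \<le> A" using assms(1) unfolding FinS_def by blast
  obtain B where B: "\<And>X. finite X \<Longrightarrow> (\<Sum>n\<in>X. w n * y n powr p) \<le> B" using assms(2) unfolding FinS_def by blast
  have "(\<Sum>n\<in>X. w n * (x n + y n) powr p) \<le> 2 powr p * (A + B)" if "finite X" for X
  proof -
    have "(\<Sum>n\<in>X. w n * (x n + y n) powr p) \<le> (\<Sum>n\<in>X. 2 powr p * (w n * x n powr p) + 2 powr p * (w n * y n powr p))"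
    proof (rule sum_mono)
      fix n
      have "w n * (x n + y n) powr p \<le> w n * (2 powr p * (x n powr p + y n powr p))"
        using assms by (intro mult_left_mono sum_le_max2) auto
      then show "w n * (x n + y n) powr p \<le> 2 powr p * (w n * x n powr p) + 2 powr p * (w n * y n powr p)"
        by (simp add: algebra_simps)
    qed
    also have "\<dots> = 2 powr p * (\<Sum>n\<in>X. w n * x n powr p) + 2 powr p * (\<Sum>n\<in>X. w n * y n powr p)"
      by (simp add: sum.distrib sum_distrib_left)
    also have "\<dots> \<le> 2 powr p * A + 2 powr p * B"
      using A[OF that] B[OF that] by (intro add_mono mult_left_mono) auto
    finally show ?thesis by (simp add: algebra_simps)
  qed
  then show ?thesis unfolding FinS_def by blast
qed

lemma FinS_scale:
  assumes "FinS w p x" "\<And>n. 0 \<le> x n" "c \<ge> 0"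
  shows "FinS w p (\<lambda>n. c * x n)"
proof -
  obtain A where A: "\<And>X. finite X \<Longrightarrow> (\<Sum>n\<in>X. w n * x n powr p) \<le> A" using assms(1) unfolding FinS_def by blast
  have "(\<Sum>n\<in>X. w n * (c * x n) powr p) \<le> c powr p * A" if "finite X" for X
  proof -
    have "(\<Sum>n\<in>X. w n * (c * x n) powr p) = c powr p * (\<Sum>n\<in>X. w n * x n powr p)"
      using assms by (simp add: powr_mult sum_distrib_left algebra_simps)
    also have "\<dots> \<le> c powr p * A" using A[OF that] by (intro mult_left_mono) auto
    finally show ?thesis .
  qed
  then show ?thesis unfolding FinS_def by blast
qed

lemma FinS_shift:
  assumes "FinS w p x" "\<And>n. 0 \<le> x n" "\<And>n. w n \<le> R * w (n - 1)" "\<And>n. 0 \<le> w n" "R \<ge> 0"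
  shows "FinS w p (\<lambda>n. x (n - 1))"
proof -
  obtain A where A: "\<And>X. finite X \<Longrightarrow> (\<Sum>n\<in>X. w n * x n powr p) \<le> A" using assms(1) unfolding FinS_def by blast
  have "(\<Sum>n\<in>X. w n * x (n - 1) powr p) \<le> R * A" if "finite X" for X
  proof -
    have "(\<Sum>n\<in>X. w n * x (n - 1) powr p) \<le> (\<Sum>n\<in>X. R * (w (n - 1) * x (n - 1) powr p))"
      using assms by (intro sum_mono) (simp add: mult.assoc[symmetric] mult_right_mono)
    also have "\<dots> = R * (\<Sum>n\<in>X. w (n - 1) * x (n - 1) powr p)" by (simp add: sum_distrib_left)
    also have "(\<Sum>n\<in>X. w (n - 1) * x (n - 1) powr p) = (\<Sum>m\<in>(\<lambda>n. n - 1) ` X. w m * x m powr p)"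
      by (subst sum.reindex) (auto simp: inj_on_def)
    also have "\<dots> \<le> A" using A that by simp
    finally show ?thesis using assms(5) by (simp add: mult_left_mono order_trans)
  qed
  then show ?thesis unfolding FinS_def by blast
qed

lemma FinS_of_summable:
  assumes "(\<lambda>n. w n * x n powr p) summable_on UNIV" "\<And>n. 0 \<le> w n"
  shows "FinS w p x"
  unfolding FinS_def
  by (rule exI[of _ "infsum (\<lambda>n. w n * x n powr p) UNIV"])
     (auto intro!: finite_sum_le_infsum assms(1) mult_nonneg_nonneg assms(2))

lemma FinS_summable:
  assumes "FinS w p x" "\<And>n. 0 \<le> w n"
  shows "(\<lambda>n. w n * x n powr p) summable_on UNIV"
proof (rule nonneg_bdd_above_summable_on)
  show "0 \<le> w n * x n powr p" for n using assms(2)[of n] by simp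
  obtain A where A: "\<And>X. finite X \<Longrightarrow> (\<Sum>n\<in>X. w n * x n powr p) \<le> A" using assms(1) unfolding FinS_def by blast
  then show "bdd_above (sum (\<lambda>n. w n * x n powr p) ` {F. F \<subseteq> UNIV \<and> finite F})"
    by (auto intro!: bdd_aboveI)
qed

lemma FinI_mono:
  assumes "FinI v y" "\<And>n. x n \<le> y n" "\<And>n. 0 \<le> v n"
  shows "FinI v x"
  using assms unfolding FinI_def by (meson mult_left_mono order_trans)

lemma FinI_add:
  assumes "FinI v x" "FinI v y"
  shows "FinI v (\<lambda>n. x n + y n)"
proof -
  obtain A B where "\<And>n. v n * x n \<le> A" "\<And>n. v n * y n \<le> B" using assms unfolding FinI_def by blast
  then have "v n * (x n + y n) \<le> A + B" for n by (simp add: distrib_left add_mono)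
  then show ?thesis unfolding FinI_def by blast
qed

lemma FinI_scale:
  assumes "FinI v x" "c \<ge> 0"
  shows "FinI v (\<lambda>n. c * x n)"
proof -
  obtain A where "\<And>n. v n * x n \<le> A" using assms unfolding FinI_def by blast
  then have "v n * (c * x n) \<le> c * A" for n using assms(2) by (metis mult.left_commute mult_left_mono)
  then show ?thesis unfolding FinI_def by blast
qed

lemma FinI_shift:
  assumes "FinI v x" "\<And>n. 0 \<le> x n" "\<And>n. v n \<le> R * v (n - 1)" "R \<ge> 0"
  shows "FinI v (\<lambda>n. x (n - 1))"
proof -
  obtain A where A: "\<And>n. v n * x n \<le> A" using assms unfolding FinI_def by blast
  have "v n * x (n - 1) \<le> R * A" for n
  proof -
    have "v n * x (n - 1) \<le> R * v (n - 1) * x (n - 1)" using assms by (intro mult_right_mono) auto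
    also have "\<dots> \<le> R * A" using A[of "n-1"] assms(4) by (simp add: mult.assoc mult_left_mono)
    finally show ?thesis .
  qed
  then show ?thesis unfolding FinI_def by blast
qed

lemma card_sym_int: "card {- int N..int N} = 2 * N + 1"
  by simp

lemma two_n_le: "real (2 * N + 1) \<le> 3 ^ N"
proof (induction N)
  case 0 then show ?case by simp
next
  case (Suc N)
  have "real (2 * Suc N + 1) = real (2 * N + 1) + 2" by simp
  also have "\<dots> \<le> 3 ^ N + 2" using Suc by simp
  also have "\<dots> \<le> 3 ^ Suc N" using one_le_power[of "3::real" N] by simp
  finally show ?case .
qed

lemma step_p:
  fixes w :: "int \<Rightarrow> real" and G a F :: "int \<Rightarrow> real"
  assumes p1: "p \<ge> 1" and wpos: "\<And>n. w n > 0" and R1: "R \<ge> 1"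
    and r1: "\<And>n. w (n+1) \<le> R * w n" and r2: "\<And>n. w n \<le> R * w (n+1)"
    and tau0: "\<tau> \<ge> 0" and K0: "K \<ge> 0" and F0: "\<And>n. F n \<ge> 0" and a0: "\<And>n. a n \<ge> 0"
    and G0: "\<And>n. G n \<ge> 0" and GC: "\<And>n. G n \<le> C"
    and rec: "\<And>n. G n \<le> a n + \<tau> * (F n + K * (G (n - 1) + G n + G (n + 1)))"
    and fa: "FinS w p a" and fF: "FinS w p F"
    and small: "10 * \<tau> * K * (2 * R + 1) * (3 * R + 1) \<le> 1"
  shows "FinS w p G"
proof -
  obtain Aa where Aa: "\<And>X. finite X \<Longrightarrow> (\<Sum>n\<in>X. w n * a n powr p) \<le> Aa" using fa unfolding FinS_def by blast
  obtain AF where AF: "\<And>X. finite X \<Longrightarrow> (\<Sum>n\<in>X. w n * F n powr p) \<le> AF" using fF unfolding FinS_def by blast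
  have Aa0: "0 \<le> Aa" using Aa[of "{}"] by simp
  have AF0: "0 \<le> AF" using AF[of "{}"] by simp
  define c where "c = \<tau> * K"
  have c0: "c \<ge> 0" using tau0 K0 by (simp add: c_def)
  define S where "S N = (\<Sum>n\<in>{- int N..int N}. w n * G n powr p)" for N
  have S0: "0 \<le> S N" for N unfolding S_def using wpos by (intro sum_nonneg) (simp add: less_imp_le)
  define \<epsilon> where "\<epsilon> = 5 powr p * c powr p * (2 * R + 1)"
  define A where "A = 5 powr p * (Aa + \<tau> powr p * AF)"
  have A0: "0 \<le> A" unfolding A_def using Aa0 AF0 by simp
  have pt: "w n * G n powr p \<le> 5 powr p * (w n * a n powr p + \<tau> powr p * (w n * F n powr p))
      + 5 powr p * c powr p * (R * (w (n - 1) * G (n - 1) powr p) + w n * G n powr p + R * (w (n + 1) * G (n + 1) powr p))" for n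
  proof -
    have "G n powr p \<le> (a n + \<tau> * F n + c * G (n - 1) + c * G n + c * G (n + 1)) powr p"
      using rec[of n] G0[of n] p1 by (intro powr_mono2) (auto simp: c_def algebra_simps)
    also have "\<dots> \<le> 5 powr p * (a n powr p + (\<tau> * F n) powr p + (c * G (n - 1)) powr p + (c * G n) powr p + (c * G (n + 1)) powr p)"
      using p1 a0 F0 G0 tau0 c0 by (intro sum_le_max5) auto
    also have "\<dots> = 5 powr p * (a n powr p + \<tau> powr p * F n powr p + c powr p * (G (n - 1) powr p + G n powr p + G (n + 1) powr p))"
      using F0 G0 tau0 c0 by (simp add: powr_mult algebra_simps)
    finally have 1: "G n powr p \<le> \<dots>" .
    have wn: "0 \<le> w n" using wpos[of n] by simp
    have "w n * G n powr p \<le> w n * (5 powr p * (a n powr p + \<tau> powr p * F n powr p + c powr p * (G (n - 1) powr p + G n powr p + G (n + 1) powr p)))"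
      using 1 wn by (rule mult_left_mono)
    also have "\<dots> = 5 powr p * (w n * a n powr p + \<tau> powr p * (w n * F n powr p))
      + 5 powr p * c powr p * (w n * G (n - 1) powr p + w n * G n powr p + w n * G (n + 1) powr p)"
      by (simp add: algebra_simps)
    also have "w n * G (n - 1) powr p \<le> R * (w (n - 1) * G (n - 1) powr p)"
      using r1[of "n - 1"] by (simp add: mult.assoc[symmetric] mult_right_mono)
    also have "w n * G (n + 1) powr p \<le> R * (w (n + 1) * G (n + 1) powr p)"
      using r2[of n] by (simp add: mult.assoc[symmetric] mult_right_mono)
    finally show ?thesis by (simp add: mult_left_mono)
  qed
  have recS: "S N \<le> A + \<epsilon> * S (Suc N)" for N
  proof -
    let ?X = "{- int N..int N}" and ?Y = "{- int (Suc N)..int (Suc N)}"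
    have sub1: "(\<lambda>n. n - 1) ` ?X \<subseteq> ?Y" and sub2: "(\<lambda>n. n + 1) ` ?X \<subseteq> ?Y" and sub3: "?X \<subseteq> ?Y" by auto
    have nn: "\<And>n. 0 \<le> w n * G n powr p" using wpos by (simp add: less_imp_le)
    have e1: "(\<Sum>n\<in>?X. w (n - 1) * G (n - 1) powr p) \<le> S (Suc N)"
    proof -
      have "(\<Sum>n\<in>?X. w (n - 1) * G (n - 1) powr p) = (\<Sum>m\<in>(\<lambda>n. n - 1) ` ?X. w m * G m powr p)"
        by (subst sum.reindex) (auto simp: inj_on_def)
      also have "\<dots> \<le> S (Suc N)" unfolding S_def by (rule sum_mono2[OF _ sub1]) (auto simp: nn)
      finally show ?thesis .
    qed
    have e2: "(\<Sum>n\<in>?X. w (n + 1) * G (n + 1) powr p) \<le> S (Suc N)"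
    proof -
      have "(\<Sum>n\<in>?X. w (n + 1) * G (n + 1) powr p) = (\<Sum>m\<in>(\<lambda>n. n + 1) ` ?X. w m * G m powr p)"
        by (subst sum.reindex) (auto simp: inj_on_def)
      also have "\<dots> \<le> S (Suc N)" unfolding S_def by (rule sum_mono2[OF _ sub2]) (auto simp: nn)
      finally show ?thesis .
    qed
    have e3: "S N \<le> S (Suc N)" unfolding S_def by (rule sum_mono2[OF _ sub3]) (auto simp: nn)
    have "S N \<le> (\<Sum>n\<in>?X. 5 powr p * (w n * a n powr p + \<tau> powr p * (w n * F n powr p))
      + 5 powr p * c powr p * (R * (w (n - 1) * G (n - 1) powr p) + w n * G n powr p + R * (w (n + 1) * G (n + 1) powr p)))"
      unfolding S_def by (rule sum_mono) (rule pt)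
    also have "\<dots> = 5 powr p * ((\<Sum>n\<in>?X. w n * a n powr p) + \<tau> powr p * (\<Sum>n\<in>?X. w n * F n powr p))
      + 5 powr p * c powr p * (R * (\<Sum>n\<in>?X. w (n - 1) * G (n - 1) powr p) + S N + R * (\<Sum>n\<in>?X. w (n + 1) * G (n + 1) powr p))"
      unfolding S_def by (simp add: sum.distrib flip: sum_distrib_left)
    also have "\<dots> \<le> 5 powr p * (Aa + \<tau> powr p * AF) + 5 powr p * c powr p * (R * S (Suc N) + S (Suc N) + R * S (Suc N))"
      using Aa[of ?X] AF[of ?X] e1 e2 e3 R1
      by (intro add_mono mult_left_mono) auto
    also have "\<dots> = A + \<epsilon> * S (Suc N)" unfolding A_def \<epsilon>_def by (simp add: algebra_simps)
    finally show ?thesis .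
  qed
  have c5: "5 * c \<le> 1"
  proof -
    have "5 * c * 1 \<le> 5 * c * ((2 * R + 1) * (3 * R + 1))"
      using R1 c0 by (intro mult_left_mono) (auto intro: order_trans[OF _ mult_mono[of 1 _ 1]])
    also have "\<dots> \<le> 1/2" using small by (simp add: c_def algebra_simps)
    finally show ?thesis by simp
  qed
  have pc: "(5 * c) powr p \<le> 5 * c"
  proof (cases "c = 0")
    case True then show ?thesis by simp
  next
    case False then show ?thesis using c0 c5 p1 by (intro powr_le_one_le) auto
  qed
  have e_eq: "\<epsilon> = (5 * c) powr p * (2 * R + 1)" unfolding \<epsilon>_def using c0 by (simp add: powr_mult)
  have eQ: "\<epsilon> * (3 * R) \<le> 1/2"
  proof -
    have "\<epsilon> * (3 * R) \<le> (5 * c) * (2 * R + 1) * (3 * R + 1)"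
      unfolding e_eq using pc R1 c0 by (intro mult_mono) auto
    also have "\<dots> \<le> 1/2" using small by (simp add: c_def algebra_simps)
    finally show ?thesis .
  qed
  have ep0: "0 \<le> \<epsilon>" unfolding \<epsilon>_def using R1 by simp
  have e12: "\<epsilon> \<le> 1/2"
  proof -
    have "\<epsilon> * 1 \<le> \<epsilon> * (3 * R)" using ep0 R1 by (intro mult_left_mono) auto
    then show ?thesis using eQ by simp
  qed
  define C' where "C' = max C 0"
  have GC': "G n \<le> C'" for n using GC[of n] by (simp add: C'_def)
  have gr: "S N \<le> (w 0 * C' powr p) * (3 * R) ^ N" for N
  proof -
    have "S N \<le> (\<Sum>n\<in>{- int N..int N}. w 0 * R ^ N * C' powr p)"
      unfolding S_def
    proof (rule sum_mono)
      fix n assume n: "n \<in> {- int N..int N}"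
      have "w n \<le> w 0 * R ^ nat \<bar>n\<bar>" by (rule w_growth[where w=w and R=R, OF r1 r2 wpos R1])
      also have "\<dots> \<le> w 0 * R ^ N" using n R1 wpos[of 0] by (intro mult_left_mono power_increasing) auto
      finally have 1: "w n \<le> w 0 * R ^ N" .
      have 2: "G n powr p \<le> C' powr p" using G0 GC' p1 by (intro powr_mono2) auto
      show "w n * G n powr p \<le> w 0 * R ^ N * C' powr p"
        using 1 2 wpos[of n] by (intro mult_mono) auto
    qed
    also have "\<dots> = real (2 * N + 1) * (w 0 * R ^ N * C' powr p)" by simp
    also have "\<dots> \<le> 3 ^ N * (w 0 * R ^ N * C' powr p)"
      using two_n_le[of N] wpos[of 0] R1 by (intro mult_right_mono) auto
    also have "\<dots> = (w 0 * C' powr p) * (3 * R) ^ N" by (simp add: power_mult_distrib)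
    finally show ?thesis .
  qed
  have Sb: "S N \<le> 2 * A" for N
    by (rule iterate_bound[OF recS S0 A0 ep0 e12 gr eQ]) (use R1 in simp)
  show ?thesis unfolding FinS_def
  proof (intro exI allI impI)
    fix X :: "int set" assume X: "finite X"
    obtain N where N: "X \<subseteq> {- int N..int N}" using finite_int_bounded[OF X] by blast
    have "(\<Sum>n\<in>X. w n * G n powr p) \<le> S N" unfolding S_def
      by (rule sum_mono2[OF _ N]) (auto simp: wpos less_imp_le)
    also have "\<dots> \<le> 2 * A" by (rule Sb)
    finally show "(\<Sum>n\<in>X. w n * G n powr p) \<le> 2 * A" .
  qed
qed

lemma step_inf:
  fixes w :: "int \<Rightarrow> real" and G a F :: "int \<Rightarrow> real"
  assumes wpos: "\<And>n. w n > 0" and R1: "R \<ge> 1"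
    and r1: "\<And>n. w (n+1) \<le> R * w n" and r2: "\<And>n. w n \<le> R * w (n+1)"
    and tau0: "\<tau> \<ge> 0" and K0: "K \<ge> 0" and F0: "\<And>n. F n \<ge> 0" and a0: "\<And>n. a n \<ge> 0"
    and G0: "\<And>n. G n \<ge> 0" and GC: "\<And>n. G n \<le> C"
    and rec: "\<And>n. G n \<le> a n + \<tau> * (F n + K * (G (n - 1) + G n + G (n + 1)))"
    and fa: "FinI (\<lambda>n. (w n)\<^sup>2) a" and fF: "FinI (\<lambda>n. (w n)\<^sup>2) F"
    and small: "2 * \<tau> * K * (2 * R\<^sup>2 + 1) * (R\<^sup>2 + 1) \<le> 1"
  shows "FinI (\<lambda>n. (w n)\<^sup>2) G"
proof -
  obtain Aa where Aa: "\<And>n. (w n)\<^sup>2 * a n \<le> Aa" using fa unfolding FinI_def by blast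
  obtain AF where AF: "\<And>n. (w n)\<^sup>2 * F n \<le> AF" using fF unfolding FinI_def by blast
  have Aa0: "0 \<le> Aa" using Aa[of 0] a0[of 0] by (meson order_trans zero_le_mult_iff zero_le_power2)
  have AF0: "0 \<le> AF" using AF[of 0] F0[of 0] by (meson order_trans zero_le_mult_iff zero_le_power2)
  define c where "c = \<tau> * K"
  have c0: "c \<ge> 0" using tau0 K0 by (simp add: c_def)
  define S where "S N = Max ((\<lambda>n. (w n)\<^sup>2 * G n) ` {- int N..int N})" for N
  have Sge: "(w n)\<^sup>2 * G n \<le> S N" if "n \<in> {- int N..int N}" for n N
    unfolding S_def by (rule Max_ge) (use that in auto)
  have S0: "0 \<le> S N" for N using Sge[of 0 N] G0[of 0] by (meson atLeastAtMost_iff neg_le_0_iff_le of_nat_0_le_iff order_trans zero_le_mult_iff zero_le_power2)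
  define \<epsilon> where "\<epsilon> = c * (2 * R\<^sup>2 + 1)"
  define A where "A = Aa + \<tau> * AF"
  have A0: "0 \<le> A" unfolding A_def using Aa0 AF0 tau0 by simp
  have ww1: "(w n)\<^sup>2 \<le> R\<^sup>2 * (w (n - 1))\<^sup>2" for n
  proof -
    have "w n \<le> R * w (n - 1)" using r1[of "n - 1"] by simp
    then have "(w n)\<^sup>2 \<le> (R * w (n - 1))\<^sup>2" using wpos[of n] by (intro power_mono) auto
    then show ?thesis by (simp add: power_mult_distrib)
  qed
  have ww2: "(w n)\<^sup>2 \<le> R\<^sup>2 * (w (n + 1))\<^sup>2" for n
  proof -
    have "(w n)\<^sup>2 \<le> (R * w (n + 1))\<^sup>2" using r2[of n] wpos[of n] by (intro power_mono) auto
    then show ?thesis by (simp add: power_mult_distrib)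
  qed
  have recS: "S N \<le> A + \<epsilon> * S (Suc N)" for N
    unfolding S_def[of N]
  proof (rule Max.boundedI)
    show "finite ((\<lambda>n. (w n)\<^sup>2 * G n) ` {- int N..int N})" by simp
    show "(\<lambda>n. (w n)\<^sup>2 * G n) ` {- int N..int N} \<noteq> {}" by simp
    fix y assume "y \<in> (\<lambda>n. (w n)\<^sup>2 * G n) ` {- int N..int N}"
    then obtain n where n: "n \<in> {- int N..int N}" and y: "y = (w n)\<^sup>2 * G n" by blast
    have s1: "(w (n - 1))\<^sup>2 * G (n - 1) \<le> S (Suc N)" using n by (intro Sge) auto
    have s2: "(w n)\<^sup>2 * G n \<le> S (Suc N)" using n by (intro Sge) auto
    have s3: "(w (n + 1))\<^sup>2 * G (n + 1) \<le> S (Suc N)" using n by (intro Sge) auto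
    have "(w n)\<^sup>2 * G n \<le> (w n)\<^sup>2 * (a n + \<tau> * (F n + K * (G (n - 1) + G n + G (n + 1))))"
      using rec[of n] by (intro mult_left_mono) auto
    also have "\<dots> = (w n)\<^sup>2 * a n + \<tau> * ((w n)\<^sup>2 * F n) + c * ((w n)\<^sup>2 * G (n - 1) + (w n)\<^sup>2 * G n + (w n)\<^sup>2 * G (n + 1))"
      by (simp add: c_def algebra_simps)
    also have "(w n)\<^sup>2 * G (n - 1) \<le> R\<^sup>2 * S (Suc N)"
    proof -
      have "(w n)\<^sup>2 * G (n - 1) \<le> R\<^sup>2 * (w (n - 1))\<^sup>2 * G (n - 1)" using ww1[of n] G0 by (intro mult_right_mono) auto
      also have "\<dots> \<le> R\<^sup>2 * S (Suc N)" using s1 by (simp add: mult.assoc mult_left_mono)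
      finally show ?thesis .
    qed
    also have "(w n)\<^sup>2 * G (n + 1) \<le> R\<^sup>2 * S (Suc N)"
    proof -
      have "(w n)\<^sup>2 * G (n + 1) \<le> R\<^sup>2 * (w (n + 1))\<^sup>2 * G (n + 1)" using ww2[of n] G0 by (intro mult_right_mono) auto
      also have "\<dots> \<le> R\<^sup>2 * S (Suc N)" using s3 by (simp add: mult.assoc mult_left_mono)
      finally show ?thesis .
    qed
    finally have "(w n)\<^sup>2 * G n \<le> (w n)\<^sup>2 * a n + \<tau> * ((w n)\<^sup>2 * F n) + c * (R\<^sup>2 * S (Suc N) + (w n)\<^sup>2 * G n + R\<^sup>2 * S (Suc N))"
      using c0 by (simp add: mult_left_mono add_mono)
    also have "\<dots> \<le> Aa + \<tau> * AF + c * (R\<^sup>2 * S (Suc N) + S (Suc N) + R\<^sup>2 * S (Suc N))"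
      using Aa[of n] AF[of n] s2 c0 tau0 by (intro add_mono mult_left_mono) auto
    also have "\<dots> = A + \<epsilon> * S (Suc N)" unfolding A_def \<epsilon>_def by (simp add: algebra_simps)
    finally show "y \<le> A + \<epsilon> * S (Suc N)" using y by simp
  qed
  have R21: "1 \<le> R\<^sup>2" using R1 by (simp add: one_le_power)
  have eQ: "\<epsilon> * R\<^sup>2 \<le> 1/2"
  proof -
    have "\<epsilon> * R\<^sup>2 \<le> \<epsilon> * (R\<^sup>2 + 1)" using c0 R1 unfolding \<epsilon>_def by (intro mult_left_mono) auto
    also have "\<dots> \<le> 1/2" using small by (simp add: \<epsilon>_def c_def algebra_simps)
    finally show ?thesis .
  qed
  have ep0: "0 \<le> \<epsilon>" unfolding \<epsilon>_def using c0 by simp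
  have e12: "\<epsilon> \<le> 1/2"
  proof -
    have "\<epsilon> * 1 \<le> \<epsilon> * R\<^sup>2" using ep0 R21 by (intro mult_left_mono) auto
    then show ?thesis using eQ by simp
  qed
  define C' where "C' = max C 0"
  have GC': "G n \<le> C'" for n using GC[of n] by (simp add: C'_def)
  have gr: "S N \<le> ((w 0)\<^sup>2 * C') * (R\<^sup>2) ^ N" for N
    unfolding S_def[of N]
  proof (rule Max.boundedI)
    show "finite ((\<lambda>n. (w n)\<^sup>2 * G n) ` {- int N..int N})" by simp
    show "(\<lambda>n. (w n)\<^sup>2 * G n) ` {- int N..int N} \<noteq> {}" by simp
    fix y assume "y \<in> (\<lambda>n. (w n)\<^sup>2 * G n) ` {- int N..int N}"
    then obtain n where n: "n \<in> {- int N..int N}" and y: "y = (w n)\<^sup>2 * G n" by blast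
    have "w n \<le> w 0 * R ^ nat \<bar>n\<bar>" by (rule w_growth[where w=w and R=R, OF r1 r2 wpos R1])
    also have "\<dots> \<le> w 0 * R ^ N" using n R1 wpos[of 0] by (intro mult_left_mono power_increasing) auto
    finally have 1: "w n \<le> w 0 * R ^ N" .
    have "(w n)\<^sup>2 \<le> (w 0 * R ^ N)\<^sup>2" using 1 wpos[of n] by (intro power_mono) auto
    then have "(w n)\<^sup>2 * G n \<le> (w 0 * R ^ N)\<^sup>2 * C'" using G0[of n] GC'[of n] by (intro mult_mono) auto
    also have "\<dots> = ((w 0)\<^sup>2 * C') * (R\<^sup>2) ^ N" by (simp add: power_mult_distrib power_mult[symmetric] mult.commute)
    finally show "y \<le> ((w 0)\<^sup>2 * C') * (R\<^sup>2) ^ N" using y by simp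
  qed
  have Sb: "S N \<le> 2 * A" for N
    by (rule iterate_bound[OF recS S0 A0 ep0 e12 gr eQ]) simp
  show ?thesis unfolding FinI_def
  proof (intro exI allI)
    fix n
    have "(w n)\<^sup>2 * G n \<le> S (nat \<bar>n\<bar>)" by (rule Sge) auto
    also have "\<dots> \<le> 2 * A" by (rule Sb)
    finally show "(w n)\<^sup>2 * G n \<le> 2 * A" .
  qed
qed

lemma time_layer:
  fixes \<alpha> \<beta> \<alpha>' \<beta>' :: "real \<Rightarrow> int \<Rightarrow> complex" and \<alpha>z \<beta>z :: "int \<Rightarrow> complex"
    and u :: "real \<Rightarrow> int \<Rightarrow> real" and Fin :: "(int \<Rightarrow> real) \<Rightarrow> bool"
  assumes Fin_step: "\<And>a G \<tau> C. 0 \<le> \<tau> \<Longrightarrow> \<tau> \<le> \<tau>z \<Longrightarrow> Fin a \<Longrightarrow> (\<And>n. 0 \<le> a n) \<Longrightarrow> (\<And>n. 0 \<le> G n)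
       \<Longrightarrow> (\<And>n. G n \<le> C) \<Longrightarrow> (\<And>n. G n \<le> a n + \<tau> * (F n + K * (G (n - 1) + G n + G (n + 1)))) \<Longrightarrow> Fin G"
    and Fin_mono: "\<And>x G. Fin G \<Longrightarrow> (\<And>n. 0 \<le> x n) \<Longrightarrow> (\<And>n. x n \<le> G n) \<Longrightarrow> Fin x"
    and tau0: "\<tau>z > 0" and K0: "K \<ge> 0" and F0: "\<And>n. F n \<ge> 0"
    and d\<alpha>: "\<And>s n. s \<in> {-tb..tb} \<Longrightarrow> ((\<lambda>r. \<alpha> r n) has_vector_derivative \<alpha>' s n) (at s)"
    and d\<beta>: "\<And>s n. s \<in> {-tb..tb} \<Longrightarrow> ((\<lambda>r. \<beta> r n) has_vector_derivative \<beta>' s n) (at s)"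
    and bd: "\<And>s n. s \<in> {-tb..tb} \<Longrightarrow> norm (\<alpha>' s n) + norm (\<beta>' s n) \<le> F n + K * (u s (n - 1) + u s n + u s (n + 1))"
    and u_def: "\<And>s n. u s n = norm (\<alpha> s n - \<alpha>z n) + norm (\<beta> s n - \<beta>z n)"
    and ub: "\<And>s n. s \<in> {-tb..tb} \<Longrightarrow> u s n \<le> Cu"
    and Fin0: "Fin (u 0)"
    and t: "t \<in> {-tb..tb}"
  shows "Fin (u t)"
proof -
  have u0: "0 \<le> u s n" for s n by (simp add: u_def)
  define h where "h = \<tau>z / 2"
  have h0: "h > 0" using tau0 by (simp add: h_def)
  have onestep: "Fin (u t)" if t0: "t0 \<in> {-tb..tb}" and t: "t \<in> {-tb..tb}" and tt: "\<bar>t - t0\<bar> \<le> h"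
    and fin0: "Fin (u t0)" for t0 t
  proof -
    define I where "I = {min t0 t..max t0 t}"
    have I_sub: "I \<subseteq> {-tb..tb}" using t0 t by (auto simp: I_def)
    have t0I: "t0 \<in> I" and tI: "t \<in> I" by (auto simp: I_def)
    have Ine: "I \<noteq> {}" using t0I by blast
    define G where "G n = Sup ((\<lambda>s. u s n) ` I)" for n
    have bdd: "bdd_above ((\<lambda>s. u s n) ` I)" for n using ub I_sub by (intro bdd_aboveI[where M=Cu]) blast
    have uG: "u s n \<le> G n" if "s \<in> I" for s n unfolding G_def using bdd that by (intro cSup_upper) auto
    have G0: "0 \<le> G n" for n using uG[OF t0I, of n] u0[of t0 n] by simp
    have GC: "G n \<le> Cu" for n unfolding G_def using Ine I_sub ub by (intro cSup_least) auto
    define M where "M n = F n + K * (G (n - 1) + G n + G (n + 1))" for n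
    have M0: "0 \<le> M n" for n unfolding M_def using F0 K0 G0 by simp
    have dbound: "norm (\<alpha>' r n) \<le> M n \<and> norm (\<beta>' r n) \<le> M n" if "r \<in> I" for r n
    proof -
      have "K * (u r (n - 1) + u r n + u r (n + 1)) \<le> K * (G (n - 1) + G n + G (n + 1))"
        using K0 uG[OF that] by (intro mult_left_mono add_mono) auto
      then have "norm (\<alpha>' r n) + norm (\<beta>' r n) \<le> M n" using bd[of r n] I_sub that by (auto simp: M_def)
      then show ?thesis by (smt (verit) norm_ge_zero)
    qed
    have sI: "u s n \<le> u t0 n + (2 * \<bar>t - t0\<bar>) * M n" if s: "s \<in> I" for s n
    proof -
      have dIa: "((\<lambda>r. \<alpha> r n) has_vector_derivative \<alpha>' r n) (at r)" if "r \<in> I" for r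
        using d\<alpha> I_sub that by blast
      have dIb: "((\<lambda>r. \<beta> r n) has_vector_derivative \<beta>' r n) (at r)" if "r \<in> I" for r
        using d\<beta> I_sub that by blast
      have st: "\<bar>s - t0\<bar> \<le> \<bar>t - t0\<bar>" using s by (auto simp: I_def)
      have "norm (\<alpha> s n - \<alpha> t0 n) \<le> M n * \<bar>s - t0\<bar>"
        by (rule mvt_rc[where f="\<lambda>r. \<alpha> r n" and f'="\<lambda>r. \<alpha>' r n"])
           (use dIa dbound s t0I in \<open>auto simp: I_def\<close>)
      also have "\<dots> \<le> M n * \<bar>t - t0\<bar>" using st M0 by (intro mult_left_mono) auto
      finally have a: "norm (\<alpha> s n - \<alpha> t0 n) \<le> M n * \<bar>t - t0\<bar>" .
      have "norm (\<beta> s n - \<beta> t0 n) \<le> M n * \<bar>s - t0\<bar>"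
        by (rule mvt_rc[where f="\<lambda>r. \<beta> r n" and f'="\<lambda>r. \<beta>' r n"])
           (use dIb dbound s t0I in \<open>auto simp: I_def\<close>)
      also have "\<dots> \<le> M n * \<bar>t - t0\<bar>" using st M0 by (intro mult_left_mono) auto
      finally have b: "norm (\<beta> s n - \<beta> t0 n) \<le> M n * \<bar>t - t0\<bar>" .
      have ta: "norm (\<alpha> s n - \<alpha>z n) \<le> norm (\<alpha> t0 n - \<alpha>z n) + norm (\<alpha> s n - \<alpha> t0 n)"
        using norm_triangle_ineq[of "\<alpha> t0 n - \<alpha>z n" "\<alpha> s n - \<alpha> t0 n"] by simp
      have tb: "norm (\<beta> s n - \<beta>z n) \<le> norm (\<beta> t0 n - \<beta>z n) + norm (\<beta> s n - \<beta> t0 n)"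
        using norm_triangle_ineq[of "\<beta> t0 n - \<beta>z n" "\<beta> s n - \<beta> t0 n"] by simp
      show ?thesis using a b ta tb unfolding u_def by (simp add: algebra_simps)
    qed
    have rec: "G n \<le> u t0 n + (2 * \<bar>t - t0\<bar>) * (F n + K * (G (n - 1) + G n + G (n + 1)))" for n
    proof -
      have "Sup ((\<lambda>s. u s n) ` I) \<le> u t0 n + (2 * \<bar>t - t0\<bar>) * M n" using Ine sI by (intro cSup_least) auto
      then show ?thesis by (simp add: G_def[symmetric] M_def)
    qed
    have "Fin G"
      by (rule Fin_step[OF _ _ fin0 u0 G0 GC rec]) (use tt h_def in auto)
    then show ?thesis by (rule Fin_mono) (use u0 uG tI in auto)
  qed
  have ind: "\<forall>s\<in>{-tb..tb}. \<bar>s\<bar> \<le> real k * h \<longrightarrow> Fin (u s)" for k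
  proof (induction k)
    case 0
    then show ?case using Fin0 by simp
  next
    case (Suc k)
    show ?case
    proof (intro ballI impI)
      fix s assume s: "s \<in> {-tb..tb}" and sk: "\<bar>s\<bar> \<le> real (Suc k) * h"
      show "Fin (u s)"
      proof (cases "\<bar>s\<bar> \<le> real k * h")
        case True then show ?thesis using Suc s by blast
      next
        case False
        define s0 where "s0 = (if s \<ge> 0 then real k * h else - (real k * h))"
        have kh: "0 \<le> real k * h" using h0 by simp
        have s0a: "\<bar>s0\<bar> = real k * h" using kh by (simp add: s0_def)
        have s0I: "s0 \<in> {-tb..tb}" using s0a False s by auto
        have ss: "\<bar>s - s0\<bar> \<le> h" using False sk kh by (auto simp: s0_def algebra_simps)
        have "Fin (u s0)" using Suc s0I s0a by simp
        then show ?thesis using onestep[OF s0I s ss] by blast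
      qed
    qed
  qed
  obtain k where k: "\<bar>t\<bar> / h \<le> real k" using real_arch_simple by blast
  have "\<bar>t\<bar> \<le> real k * h" using k h0 by (simp add: field_simps)
  then show ?thesis using ind[of k] t by blast
qed

lemma alg_bound:
  fixes x y z x0 y0 z0 bb bb0 :: complex
  assumes "norm x \<le> B" "norm z \<le> B" "norm y0 \<le> B" "norm bb \<le> B" "0 \<le> B"
  shows "norm ((1 - y * bb) * (x + z) - 2 * y) \<le> norm (x0 - y0) + norm (y0 - z0) + 2 * B * (norm y0 * norm bb0)
     + (2 + 2 * B\<^sup>2) * (norm (x - x0) + norm (y - y0) + norm (z - z0) + norm (bb - bb0))"
proof -
  have e: "(1 - y * bb) * (x + z) - 2 * y = (x - y) + (z - y) - (y0 * bb0 + y0 * (bb - bb0) + (y - y0) * bb) * (x + z)"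
    by (simp add: algebra_simps)
  have n1: "norm (x - y) \<le> norm (x0 - y0) + norm (x - x0) + norm (y - y0)"
  proof -
    have eq: "x - y = (x0 - y0) + (x - x0) - (y - y0)" by simp
    show ?thesis unfolding eq using norm_triangle_ineq4[of "(x0 - y0) + (x - x0)" "y - y0"] norm_triangle_ineq[of "x0 - y0" "x - x0"] by linarith
  qed
  have n2: "norm (z - y) \<le> norm (y0 - z0) + norm (z - z0) + norm (y - y0)"
  proof -
    have eq: "z - y = (z - z0) - (y0 - z0) - (y - y0)" by simp
    show ?thesis unfolding eq using norm_triangle_ineq4[of "(z - z0) - (y0 - z0)" "y - y0"] norm_triangle_ineq4[of "z - z0" "y0 - z0"] by linarith
  qed
  have n3: "norm (y0 * bb0 + y0 * (bb - bb0) + (y - y0) * bb) \<le> norm y0 * norm bb0 + B * norm (bb - bb0) + norm (y - y0) * B"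
  proof -
    have a: "norm (y0 * (bb - bb0)) \<le> B * norm (bb - bb0)" using assms by (simp add: norm_mult mult_right_mono)
    have b: "norm ((y - y0) * bb) \<le> norm (y - y0) * B" using assms by (simp add: norm_mult mult_left_mono)
    have "norm (y0 * bb0 + y0 * (bb - bb0) + (y - y0) * bb) \<le> norm (y0 * bb0) + norm (y0 * (bb - bb0)) + norm ((y - y0) * bb)"
      using norm_triangle_ineq[of "y0 * bb0 + y0 * (bb - bb0)" "(y - y0) * bb"] norm_triangle_ineq[of "y0 * bb0" "y0 * (bb - bb0)"] by linarith
    then show ?thesis using a b by (simp add: norm_mult)
  qed
  have n4: "norm (x + z) \<le> 2 * B" using assms norm_triangle_ineq[of x z] by linarith
  have n5: "norm ((y0 * bb0 + y0 * (bb - bb0) + (y - y0) * bb) * (x + z)) \<le> (norm y0 * norm bb0 + B * norm (bb - bb0) + norm (y - y0) * B) * (2 * B)"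
    unfolding norm_mult using n3 n4 assms(5) by (intro mult_mono) auto
  have "norm ((1 - y * bb) * (x + z) - 2 * y) \<le> norm (x - y) + norm (z - y) + norm ((y0 * bb0 + y0 * (bb - bb0) + (y - y0) * bb) * (x + z))"
    unfolding e
    using norm_triangle_ineq4[of "x - y + (z - y)" "(y0 * bb0 + y0 * (bb - bb0) + (y - y0) * bb) * (x + z)"]
      norm_triangle_ineq[of "x - y" "z - y"] by linarith
  also have "\<dots> \<le> (norm (x0 - y0) + norm (x - x0) + norm (y - y0)) + (norm (y0 - z0) + norm (z - z0) + norm (y - y0))
     + (norm y0 * norm bb0 + B * norm (bb - bb0) + norm (y - y0) * B) * (2 * B)"
    using n1 n2 n5 by linarith
  also have "\<dots> = norm (x0 - y0) + norm (y0 - z0) + 2 * B * (norm y0 * norm bb0)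
     + (norm (x - x0) + 2 * norm (y - y0) + norm (z - z0)) + 2 * B\<^sup>2 * (norm (bb - bb0) + norm (y - y0))"
    by (simp add: algebra_simps power2_eq_square)
  also have "\<dots> \<le> norm (x0 - y0) + norm (y0 - z0) + 2 * B * (norm y0 * norm bb0)
     + (2 + 2 * B\<^sup>2) * (norm (x - x0) + norm (y - y0) + norm (z - z0) + norm (bb - bb0))"
  proof -
    have "norm (x - x0) + 2 * norm (y - y0) + norm (z - z0) \<le> 2 * (norm (x - x0) + norm (y - y0) + norm (z - z0) + norm (bb - bb0))"
      by simp
    moreover have "2 * B\<^sup>2 * (norm (bb - bb0) + norm (y - y0)) \<le> 2 * B\<^sup>2 * (norm (x - x0) + norm (y - y0) + norm (z - z0) + norm (bb - bb0))"
      by (intro mult_left_mono) auto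
    ultimately show ?thesis by (simp add: algebra_simps)
  qed
  finally show ?thesis .
qed

lemma powr_prod_le:
  fixes x y q :: real
  assumes "0 \<le> x" "0 \<le> y"
  shows "(x * y) powr q \<le> x powr (2 * q) + y powr (2 * q)"
proof -
  have "(x * y) powr q = x powr q * y powr q" using assms by (simp add: powr_mult)
  moreover have "x powr (2 * q) = (x powr q)\<^sup>2"
  proof -
    have "2 * q = q + q" by simp
    then have "x powr (2 * q) = x powr (q + q)" by (rule arg_cong)
    also have "\<dots> = x powr q * x powr q" by (rule powr_add)
    finally show ?thesis by (simp only: power2_eq_square)
  qed
  moreover have "y powr (2 * q) = (y powr q)\<^sup>2"
  proof -
    have "2 * q = q + q" by simp
    then have "y powr (2 * q) = y powr (q + q)" by (rule arg_cong)
    also have "\<dots> = y powr q * y powr q" by (rule powr_add)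
    finally show ?thesis by (simp only: power2_eq_square)
  qed
  moreover have "a * b \<le> a\<^sup>2 + b\<^sup>2" if "0 \<le> a" "0 \<le> b" for a b :: real
    using that sum_squares_bound[of a b] mult_nonneg_nonneg[of a b] by linarith
  ultimately show ?thesis by simp
qed

lemma pair_FinS:
  assumes "wnorm_p_finite w q a b" "\<And>n. 0 \<le> w n"
  shows "FinS w q (\<lambda>n. norm (a n))" "FinS w q (\<lambda>n. norm (b n))"
proof -
  let ?f = "\<lambda>n. w n * (norm (a n) powr q + norm (b n) powr q)"
  have s: "?f summable_on UNIV" using assms(1) unfolding wnorm_p_finite_def .
  have nn: "0 \<le> ?f n" for n using assms(2)[of n] by simp
  have le: "sum ?f X \<le> infsum ?f UNIV" if "finite X" for X
    using finite_sum_le_infsum[OF s that] nn by auto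
  show "FinS w q (\<lambda>n. norm (a n))" unfolding FinS_def
  proof (intro exI allI impI)
    fix X :: "int set" assume X: "finite X"
    have "(\<Sum>n\<in>X. w n * norm (a n) powr q) \<le> sum ?f X" using assms(2) by (intro sum_mono mult_left_mono) auto
    then show "(\<Sum>n\<in>X. w n * norm (a n) powr q) \<le> infsum ?f UNIV" using le[OF X] by linarith
  qed
  show "FinS w q (\<lambda>n. norm (b n))" unfolding FinS_def
  proof (intro exI allI impI)
    fix X :: "int set" assume X: "finite X"
    have "(\<Sum>n\<in>X. w n * norm (b n) powr q) \<le> sum ?f X" using assms(2) by (intro sum_mono mult_left_mono) auto
    then show "(\<Sum>n\<in>X. w n * norm (b n) powr q) \<le> infsum ?f UNIV" using le[OF X] by linarith
  qed
qed

lemma prod_FinS: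
  assumes "wnorm_p_finite w (2 * q) a b" "\<And>n. 0 \<le> w n"
  shows "FinS w q (\<lambda>n. norm (a n) * norm (b n))"
proof -
  let ?f = "\<lambda>n. w n * (norm (a n) powr (2 * q) + norm (b n) powr (2 * q))"
  have s: "?f summable_on UNIV" using assms(1) unfolding wnorm_p_finite_def .
  have nn: "0 \<le> ?f n" for n using assms(2)[of n] by simp
  show ?thesis unfolding FinS_def
  proof (intro exI allI impI)
    fix X :: "int set" assume X: "finite X"
    have "(\<Sum>n\<in>X. w n * (norm (a n) * norm (b n)) powr q) \<le> sum ?f X"
      using assms(2) by (intro sum_mono mult_left_mono powr_prod_le) auto
    then show "(\<Sum>n\<in>X. w n * (norm (a n) * norm (b n)) powr q) \<le> infsum ?f UNIV"
      using finite_sum_le_infsum[OF s X] nn by auto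
  qed
qed

lemma pair_FinI:
  assumes "wnorm_inf_finite v a b" "\<And>n. 0 \<le> v n"
  shows "FinI v (\<lambda>n. norm (a n) + norm (b n))" "FinI v (\<lambda>n. norm (a n))" "FinI v (\<lambda>n. norm (b n))"
proof -
  obtain A where A: "\<And>n. v n * (norm (a n) + norm (b n)) \<le> A"
    using assms(1) unfolding wnorm_inf_finite_def bdd_above_def by auto
  show 1: "FinI v (\<lambda>n. norm (a n) + norm (b n))" unfolding FinI_def using A by blast
  show "FinI v (\<lambda>n. norm (a n))" by (rule FinI_mono[OF 1]) (auto simp: assms(2))
  show "FinI v (\<lambda>n. norm (b n))" by (rule FinI_mono[OF 1]) (auto simp: assms(2))
qed

theorem theorem2p4:
  fixes w :: "int \<Rightarrow> real" and p :: ennreal and T :: real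
    and \<alpha>0 \<beta>0 \<alpha>t0 \<beta>t0 :: "int \<Rightarrow> complex"
    and \<alpha> \<beta> \<alpha>' \<beta>' :: "real \<Rightarrow> (int \<Rightarrow>\<^sub>C complex)"
  assumes w_ge1: "\<And>n. w n \<ge> 1"
    and w_ratio: "bdd_above (range (\<lambda>n. \<bar>w (n + 1) / w n\<bar> + \<bar>w n / w (n + 1)\<bar>))"
    and p_ge1: "1 \<le> p"
    and bdd: "bounded_seq \<alpha>0" "bounded_seq \<beta>0" "bounded_seq \<alpha>t0" "bounded_seq \<beta>t0"
    and data_fin: "p \<noteq> \<infinity> \<Longrightarrow>
        wnorm_p_finite w (2 * enn2real p) \<alpha>0 \<beta>0 \<and>
        wnorm_p_finite w (enn2real p) (\<lambda>n. \<alpha>0 n - \<alpha>0 (n + 1)) (\<lambda>n. \<beta>0 n - \<beta>0 (n + 1)) \<and>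
        wnorm_p_finite w (enn2real p) \<alpha>t0 \<beta>t0"
    and data_inf: "p = \<infinity> \<Longrightarrow>
        wnorm_inf_finite w \<alpha>0 \<beta>0 \<and>
        wnorm_inf_finite (\<lambda>n. (w n)\<^sup>2) (\<lambda>n. \<alpha>0 n - \<alpha>0 (n + 1)) (\<lambda>n. \<beta>0 n - \<beta>0 (n + 1)) \<and>
        wnorm_inf_finite (\<lambda>n. (w n)\<^sup>2) \<alpha>t0 \<beta>t0"
    and T_pos: "T > 0"
    and deriv: "\<And>t. t \<in> {-T<..<T} \<Longrightarrow>
        (\<alpha> has_vector_derivative \<alpha>' t) (at t) \<and> (\<beta> has_vector_derivative \<beta>' t) (at t)"
    and C1: "continuous_on {-T<..<T} \<alpha>'" "continuous_on {-T<..<T} \<beta>'"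
    and eq_\<alpha>: "\<And>t n. t \<in> {-T<..<T} \<Longrightarrow>
        - \<i> * \<alpha>' t n - (1 - \<alpha> t n * \<beta> t n) * (\<alpha> t (n - 1) + \<alpha> t (n + 1)) + 2 * \<alpha> t n = 0"
    and eq_\<beta>: "\<And>t n. t \<in> {-T<..<T} \<Longrightarrow>
        - \<i> * \<beta>' t n + (1 - \<alpha> t n * \<beta> t n) * (\<beta> t (n - 1) + \<beta> t (n + 1)) - 2 * \<beta> t n = 0"
    and init: "\<And>n. \<alpha> 0 n = \<alpha>0 n + \<alpha>t0 n" "\<And>n. \<beta> 0 n = \<beta>0 n + \<beta>t0 n"
  shows "\<forall>t \<in> {-T<..<T}.
     (p \<noteq> \<infinity> \<longrightarrow> wnorm_p_finite w (enn2real p) (\<lambda>n. \<alpha> t n - \<alpha>0 n) (\<lambda>n. \<beta> t n - \<beta>0 n)) \<and>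
     (p = \<infinity> \<longrightarrow> wnorm_inf_finite (\<lambda>n. (w n)\<^sup>2) (\<lambda>n. \<alpha> t n - \<alpha>0 n) (\<lambda>n. \<beta> t n - \<beta>0 n))"
proof -
  have wpos: "w n > 0" for n using w_ge1[of n] by linarith
  have wnn: "0 \<le> w n" for n using wpos[of n] by linarith
  obtain R0 where R0: "\<And>n. \<bar>w (n + 1) / w n\<bar> + \<bar>w n / w (n + 1)\<bar> \<le> R0"
    using w_ratio unfolding bdd_above_def by auto
  define R where "R = max R0 1"
  have R1: "R \<ge> 1" by (simp add: R_def)
  have r1: "w (n + 1) \<le> R * w n" for n
  proof -
    have "w (n + 1) / w n \<le> R" using R0[of n] unfolding R_def by (smt (verit) abs_ge_self abs_ge_zero)
    then show ?thesis using wpos[of n] by (simp add: pos_divide_le_eq)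
  qed
  have r2: "w n \<le> R * w (n + 1)" for n
  proof -
    have "w n / w (n + 1) \<le> R" using R0[of n] unfolding R_def by (smt (verit) abs_ge_self abs_ge_zero)
    then show ?thesis using wpos[of "n + 1"] by (simp add: pos_divide_le_eq)
  qed
  have r1': "w n \<le> R * w (n - 1)" for n using r1[of "n - 1"] by simp
  show ?thesis
  proof
    fix t assume t: "t \<in> {-T<..<T}"
    define t1 where "t1 = \<bar>t\<bar>"
    have t1T: "{-t1..t1} \<subseteq> {-T<..<T}" using t by (auto simp: t1_def)
    have tI: "t \<in> {-t1..t1}" unfolding t1_def atLeastAtMost_iff by arith
    have d\<alpha>0: "(\<alpha> has_vector_derivative \<alpha>' s) (at s)" if "s \<in> {-t1..t1}" for s
      using deriv t1T that by blast
    have d\<beta>0: "(\<beta> has_vector_derivative \<beta>' s) (at s)" if "s \<in> {-t1..t1}" for s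
      using deriv t1T that by blast
    have c\<alpha>: "continuous_on {-t1..t1} \<alpha>"
      by (rule continuous_at_imp_continuous_on) (use d\<alpha>0 has_vector_derivative_continuous in blast)
    have c\<beta>: "continuous_on {-t1..t1} \<beta>"
      by (rule continuous_at_imp_continuous_on) (use d\<beta>0 has_vector_derivative_continuous in blast)
    obtain Ba where Ba: "\<And>s. s \<in> {-t1..t1} \<Longrightarrow> norm (\<alpha> s) \<le> Ba"
      using compact_imp_bounded[OF compact_continuous_image[OF c\<alpha> compact_Icc]] unfolding bounded_iff by blast
    obtain Bb where Bb: "\<And>s. s \<in> {-t1..t1} \<Longrightarrow> norm (\<beta> s) \<le> Bb"
      using compact_imp_bounded[OF compact_continuous_image[OF c\<beta> compact_Icc]] unfolding bounded_iff by blast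
    obtain Ba0 where Ba0: "\<And>n. norm (\<alpha>0 n) \<le> Ba0"
      using bdd(1) unfolding bounded_seq_def bdd_above_def by auto
    obtain Bb0 where Bb0: "\<And>n. norm (\<beta>0 n) \<le> Bb0"
      using bdd(2) unfolding bounded_seq_def bdd_above_def by auto
    define B where "B = max (max Ba Bb) (max (max Ba0 Bb0) 0)"
    have B0: "0 \<le> B" by (simp add: B_def)
    have b\<alpha>: "norm (\<alpha> s n) \<le> B" if "s \<in> {-t1..t1}" for s n
      using norm_bounded[of "\<alpha> s" n] Ba[OF that] unfolding B_def by linarith
    have b\<beta>: "norm (\<beta> s n) \<le> B" if "s \<in> {-t1..t1}" for s n
      using norm_bounded[of "\<beta> s" n] Bb[OF that] unfolding B_def by linarith
    have b\<alpha>0: "norm (\<alpha>0 n) \<le> B" for n using Ba0[of n] unfolding B_def by linarith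
    have b\<beta>0: "norm (\<beta>0 n) \<le> B" for n using Bb0[of n] unfolding B_def by linarith
    define K where "K = 4 + 4 * B\<^sup>2"
    have K0: "0 \<le> K" by (simp add: K_def)
    define D\<alpha> where "D\<alpha> m = norm (\<alpha>0 m - \<alpha>0 (m + 1))" for m
    define D\<beta> where "D\<beta> m = norm (\<beta>0 m - \<beta>0 (m + 1))" for m
    define P where "P n = norm (\<alpha>0 n) * norm (\<beta>0 n)" for n
    define F where "F n = D\<alpha> (n - 1) + D\<alpha> n + D\<beta> (n - 1) + D\<beta> n + 4 * B * P n" for n
    have F0: "0 \<le> F n" for n unfolding F_def D\<alpha>_def D\<beta>_def P_def using B0 by simp
    define u where "u s n = norm (\<alpha> s n - \<alpha>0 n) + norm (\<beta> s n - \<beta>0 n)" for s n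
    have d\<alpha>: "((\<lambda>r. \<alpha> r n) has_vector_derivative \<alpha>' s n) (at s)" if "s \<in> {-t1..t1}" for s n
      by (rule deriv_apply[OF d\<alpha>0[OF that]])
    have d\<beta>: "((\<lambda>r. \<beta> r n) has_vector_derivative \<beta>' s n) (at s)" if "s \<in> {-t1..t1}" for s n
      by (rule deriv_apply[OF d\<beta>0[OF that]])
    have bd: "norm (\<alpha>' s n) + norm (\<beta>' s n) \<le> F n + K * (u s (n - 1) + u s n + u s (n + 1))"
      if s: "s \<in> {-t1..t1}" for s n
    proof -
      have sT: "s \<in> {-T<..<T}" using s t1T by blast
      let ?Xa = "(1 - \<alpha> s n * \<beta> s n) * (\<alpha> s (n - 1) + \<alpha> s (n + 1)) - 2 * \<alpha> s n"
      let ?Xb = "(1 - \<beta> s n * \<alpha> s n) * (\<beta> s (n - 1) + \<beta> s (n + 1)) - 2 * \<beta> s n"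
      have ea: "- \<i> * \<alpha>' s n = ?Xa"
      proof -
        have "- \<i> * \<alpha>' s n = (- \<i> * \<alpha>' s n - (1 - \<alpha> s n * \<beta> s n) * (\<alpha> s (n - 1) + \<alpha> s (n + 1)) + 2 * \<alpha> s n) + ?Xa"
          by simp
        also have "\<dots> = ?Xa" using eq_\<alpha>[OF sT, of n] by simp
        finally show ?thesis .
      qed
      have eb: "- \<i> * \<beta>' s n = - ?Xb"
      proof -
        have "- \<i> * \<beta>' s n = (- \<i> * \<beta>' s n + (1 - \<alpha> s n * \<beta> s n) * (\<beta> s (n - 1) + \<beta> s (n + 1)) - 2 * \<beta> s n) - ?Xb"
          by (simp add: mult.commute)
        also have "\<dots> = - ?Xb" using eq_\<beta>[OF sT, of n] by simp
        finally show ?thesis .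
      qed
      have na: "norm (\<alpha>' s n) = norm ?Xa"
      proof -
        have "norm (\<alpha>' s n) = norm (- \<i> * \<alpha>' s n)" by (simp add: norm_mult)
        also have "\<dots> = norm ?Xa" by (simp only: ea)
        finally show ?thesis .
      qed
      have nb: "norm (\<beta>' s n) = norm ?Xb"
      proof -
        have "norm (\<beta>' s n) = norm (- \<i> * \<beta>' s n)" by (simp add: norm_mult)
        also have "\<dots> = norm (- ?Xb)" by (simp only: eb)
        finally show ?thesis by (simp only: norm_minus_cancel)
      qed
      have A1: "norm ?Xa \<le> norm (\<alpha>0 (n - 1) - \<alpha>0 n) + norm (\<alpha>0 n - \<alpha>0 (n + 1)) + 2 * B * (norm (\<alpha>0 n) * norm (\<beta>0 n))
          + (2 + 2 * B\<^sup>2) * (norm (\<alpha> s (n - 1) - \<alpha>0 (n - 1)) + norm (\<alpha> s n - \<alpha>0 n) + norm (\<alpha> s (n + 1) - \<alpha>0 (n + 1)) + norm (\<beta> s n - \<beta>0 n))"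
        by (rule alg_bound) (use b\<alpha> b\<beta> b\<alpha>0 B0 s in auto)
      have A2: "norm ?Xb \<le> norm (\<beta>0 (n - 1) - \<beta>0 n) + norm (\<beta>0 n - \<beta>0 (n + 1)) + 2 * B * (norm (\<beta>0 n) * norm (\<alpha>0 n))
          + (2 + 2 * B\<^sup>2) * (norm (\<beta> s (n - 1) - \<beta>0 (n - 1)) + norm (\<beta> s n - \<beta>0 n) + norm (\<beta> s (n + 1) - \<beta>0 (n + 1)) + norm (\<alpha> s n - \<alpha>0 n))"
        by (rule alg_bound) (use b\<alpha> b\<beta> b\<beta>0 B0 s in auto)
      have Dm: "D\<alpha> (n - 1) = norm (\<alpha>0 (n - 1) - \<alpha>0 n)" "D\<beta> (n - 1) = norm (\<beta>0 (n - 1) - \<beta>0 n)"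
        by (simp_all add: D\<alpha>_def D\<beta>_def)
      have sumle: "(2 + 2 * B\<^sup>2) * (norm (\<alpha> s (n - 1) - \<alpha>0 (n - 1)) + norm (\<alpha> s n - \<alpha>0 n) + norm (\<alpha> s (n + 1) - \<alpha>0 (n + 1)) + norm (\<beta> s n - \<beta>0 n))
         + (2 + 2 * B\<^sup>2) * (norm (\<beta> s (n - 1) - \<beta>0 (n - 1)) + norm (\<beta> s n - \<beta>0 n) + norm (\<beta> s (n + 1) - \<beta>0 (n + 1)) + norm (\<alpha> s n - \<alpha>0 n))
         \<le> K * (u s (n - 1) + u s n + u s (n + 1))"
      proof -
        have "(2 + 2 * B\<^sup>2) * (norm (\<alpha> s (n - 1) - \<alpha>0 (n - 1)) + norm (\<alpha> s n - \<alpha>0 n) + norm (\<alpha> s (n + 1) - \<alpha>0 (n + 1)) + norm (\<beta> s n - \<beta>0 n))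
         + (2 + 2 * B\<^sup>2) * (norm (\<beta> s (n - 1) - \<beta>0 (n - 1)) + norm (\<beta> s n - \<beta>0 n) + norm (\<beta> s (n + 1) - \<beta>0 (n + 1)) + norm (\<alpha> s n - \<alpha>0 n))
          = (2 + 2 * B\<^sup>2) * (u s (n - 1) + 2 * u s n + u s (n + 1))"
          unfolding u_def by (simp add: algebra_simps)
        also have "\<dots> \<le> (2 + 2 * B\<^sup>2) * (2 * (u s (n - 1) + u s n + u s (n + 1)))"
          by (intro mult_left_mono) (auto simp: u_def)
        also have "\<dots> = K * (u s (n - 1) + u s n + u s (n + 1))" by (simp add: K_def algebra_simps)
        finally show ?thesis .
      qed
      have "norm (\<alpha>' s n) + norm (\<beta>' s n) \<le> (D\<alpha> (n - 1) + D\<alpha> n + D\<beta> (n - 1) + D\<beta> n + 4 * B * P n) + K * (u s (n - 1) + u s n + u s (n + 1))"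
        using na nb A1 A2 sumle unfolding Dm by (simp add: D\<alpha>_def D\<beta>_def P_def algebra_simps)
      then show ?thesis by (simp add: F_def)
    qed
    have u0: "0 \<le> u s n" for s n by (simp add: u_def)
    have ub: "u s n \<le> 4 * B" if "s \<in> {-t1..t1}" for s n
    proof -
      have "norm (\<alpha> s n - \<alpha>0 n) \<le> 2 * B" using b\<alpha>[OF that, of n] b\<alpha>0[of n] norm_triangle_ineq4[of "\<alpha> s n" "\<alpha>0 n"] by linarith
      moreover have "norm (\<beta> s n - \<beta>0 n) \<le> 2 * B" using b\<beta>[OF that, of n] b\<beta>0[of n] norm_triangle_ineq4[of "\<beta> s n" "\<beta>0 n"] by linarith
      ultimately show ?thesis by (simp add: u_def)
    qed
    have u_init0: "u 0 n = norm (\<alpha>t0 n) + norm (\<beta>t0 n)" for n by (simp add: u_def init)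
    have u_init: "u 0 = (\<lambda>n. norm (\<alpha>t0 n) + norm (\<beta>t0 n))" by (rule ext) (rule u_init0)
    show "(p \<noteq> \<infinity> \<longrightarrow> wnorm_p_finite w (enn2real p) (\<lambda>n. \<alpha> t n - \<alpha>0 n) (\<lambda>n. \<beta> t n - \<beta>0 n)) \<and>
     (p = \<infinity> \<longrightarrow> wnorm_inf_finite (\<lambda>n. (w n)\<^sup>2) (\<lambda>n. \<alpha> t n - \<alpha>0 n) (\<lambda>n. \<beta> t n - \<beta>0 n))"
    proof (intro conjI impI)
      assume pfin: "p \<noteq> \<infinity>"
      define q where "q = enn2real p"
      have q1: "1 \<le> q"
      proof -
        have "enn2real 1 \<le> enn2real p" using p_ge1 pfin by (intro enn2real_mono) (auto simp: top_unique less_top)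
        then show ?thesis by (simp add: q_def)
      qed
      have q0: "0 \<le> q" using q1 by simp
      have dat: "wnorm_p_finite w (2 * q) \<alpha>0 \<beta>0"
          "wnorm_p_finite w q (\<lambda>n. \<alpha>0 n - \<alpha>0 (n + 1)) (\<lambda>n. \<beta>0 n - \<beta>0 (n + 1))"
          "wnorm_p_finite w q \<alpha>t0 \<beta>t0"
        using data_fin[OF pfin] unfolding q_def by auto
      have Fin0: "FinS w q (u 0)"
      proof -
        have "FinS w q (\<lambda>n. norm (\<alpha>t0 n) + norm (\<beta>t0 n))"
          by (rule FinS_add[OF pair_FinS[OF dat(3) wnn] _ _ wnn q1]) auto
        then show ?thesis by (simp only: u_init)
      qed
      have fDa: "FinS w q D\<alpha>" using pair_FinS(1)[OF dat(2) wnn] by (simp add: D\<alpha>_def[abs_def])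
      have fDb: "FinS w q D\<beta>" using pair_FinS(2)[OF dat(2) wnn] by (simp add: D\<beta>_def[abs_def])
      have fDa': "FinS w q (\<lambda>n. D\<alpha> (n - 1))" by (rule FinS_shift[OF fDa _ r1' wnn]) (use R1 in \<open>auto simp: D\<alpha>_def\<close>)
      have fDb': "FinS w q (\<lambda>n. D\<beta> (n - 1))" by (rule FinS_shift[OF fDb _ r1' wnn]) (use R1 in \<open>auto simp: D\<beta>_def\<close>)
      have fP: "FinS w q P" using prod_FinS[OF dat(1) wnn] by (simp add: P_def[abs_def])
      have fP': "FinS w q (\<lambda>n. 4 * B * P n)" by (rule FinS_scale[OF fP]) (use B0 in \<open>auto simp: P_def\<close>)
      have f1: "FinS w q (\<lambda>n. D\<alpha> (n - 1) + D\<alpha> n)"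
        by (rule FinS_add[OF fDa' fDa _ _ wnn q1]) (auto simp: D\<alpha>_def)
      have f2: "FinS w q (\<lambda>n. D\<alpha> (n - 1) + D\<alpha> n + D\<beta> (n - 1))"
        by (rule FinS_add[OF f1 fDb' _ _ wnn q1]) (auto simp: D\<alpha>_def D\<beta>_def)
      have f3: "FinS w q (\<lambda>n. D\<alpha> (n - 1) + D\<alpha> n + D\<beta> (n - 1) + D\<beta> n)"
        by (rule FinS_add[OF f2 fDb _ _ wnn q1]) (auto simp: D\<alpha>_def D\<beta>_def)
      have fF: "FinS w q F"
        unfolding F_def by (rule FinS_add[OF f3 fP' _ _ wnn q1]) (use B0 in \<open>auto simp: D\<alpha>_def D\<beta>_def P_def\<close>)
      define \<tau>0 where "\<tau>0 = 1 / (10 * (K + 1) * (2 * R + 1) * (3 * R + 1))"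
      have tau0: "\<tau>0 > 0" unfolding \<tau>0_def using K0 R1 by simp
      have fut: "FinS w q (u t)"
      proof (rule time_layer[where \<alpha>="\<lambda>s n. \<alpha> s n" and \<beta>="\<lambda>s n. \<beta> s n" and \<alpha>'="\<lambda>s n. \<alpha>' s n"
            and \<beta>'="\<lambda>s n. \<beta>' s n" and \<alpha>z=\<alpha>0 and \<beta>z=\<beta>0 and u=u and Fin="FinS w q" and F=F and K=K
            and \<tau>z=\<tau>0 and tb=t1 and Cu="4 * B"])
        fix a G :: "int \<Rightarrow> real" and \<tau> C
        assume h: "0 \<le> \<tau>" "\<tau> \<le> \<tau>0" "FinS w q a" "\<And>n. 0 \<le> a n" "\<And>n. 0 \<le> G n" "\<And>n. G n \<le> C"
          "\<And>n. G n \<le> a n + \<tau> * (F n + K * (G (n - 1) + G n + G (n + 1)))"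
        have X0: "0 < (2 * R + 1) * (3 * R + 1)" using R1 by simp
        have "\<tau> * K \<le> \<tau>0 * (K + 1)" using h(1,2) K0 tau0 by (intro mult_mono) auto
        then have "10 * (\<tau> * K) * ((2 * R + 1) * (3 * R + 1)) \<le> 10 * (\<tau>0 * (K + 1)) * ((2 * R + 1) * (3 * R + 1))"
          using X0 by (intro mult_right_mono) auto
        also have "\<dots> = (10 * (K + 1) * (2 * R + 1) * (3 * R + 1)) * \<tau>0" by (simp add: algebra_simps)
        also have "\<dots> = 1" unfolding \<tau>0_def using X0 K0 R1 by (simp add: add_pos_nonneg)
        finally have sm: "10 * \<tau> * K * (2 * R + 1) * (3 * R + 1) \<le> 1" by (simp add: algebra_simps)
        show "FinS w q G"
          by (rule step_p[OF q1 wpos R1 r1 r2 h(1) K0 F0 h(4) h(5) h(6) h(7) h(3) fF sm])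
      next
        fix x G :: "int \<Rightarrow> real"
        assume "FinS w q G" "\<And>n. 0 \<le> x n" "\<And>n. x n \<le> G n"
        then show "FinS w q x" using FinS_mono wnn q0 by blast
      qed (use tau0 K0 F0 d\<alpha> d\<beta> bd ub Fin0 tI in \<open>auto simp: u_def\<close>)
      have fa: "FinS w q (\<lambda>n. norm (\<alpha> t n - \<alpha>0 n))"
        by (rule FinS_mono[OF fut]) (auto simp: u_def wnn q0)
      have fb: "FinS w q (\<lambda>n. norm (\<beta> t n - \<beta>0 n))"
        by (rule FinS_mono[OF fut]) (auto simp: u_def wnn q0)
      have "(\<lambda>n. w n * norm (\<alpha> t n - \<alpha>0 n) powr q + w n * norm (\<beta> t n - \<beta>0 n) powr q) summable_on UNIV"
        by (rule summable_on_add[OF FinS_summable[OF fa wnn] FinS_summable[OF fb wnn]])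
      then show "wnorm_p_finite w (enn2real p) (\<lambda>n. \<alpha> t n - \<alpha>0 n) (\<lambda>n. \<beta> t n - \<beta>0 n)"
        unfolding wnorm_p_finite_def q_def[symmetric] by (simp add: distrib_left)
    next
      assume pinf: "p = \<infinity>"
      define v where "v n = (w n)\<^sup>2" for n
      have vnn: "0 \<le> v n" for n by (simp add: v_def)
      have dat: "wnorm_inf_finite w \<alpha>0 \<beta>0"
          "wnorm_inf_finite v (\<lambda>n. \<alpha>0 n - \<alpha>0 (n + 1)) (\<lambda>n. \<beta>0 n - \<beta>0 (n + 1))"
          "wnorm_inf_finite v \<alpha>t0 \<beta>t0"
        using data_inf[OF pinf] unfolding v_def[abs_def] by auto
      have vr: "v n \<le> R\<^sup>2 * v (n - 1)" for n
      proof -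
        have "(w n)\<^sup>2 \<le> (R * w (n - 1))\<^sup>2" using r1'[of n] wnn[of n] by (intro power_mono) auto
        then show ?thesis by (simp add: v_def power_mult_distrib)
      qed
      have Fin0: "FinI v (u 0)"
        unfolding u_init by (rule pair_FinI(1)[OF dat(3) vnn])
      have fDa: "FinI v D\<alpha>" using pair_FinI(2)[OF dat(2) vnn] by (simp add: D\<alpha>_def[abs_def])
      have fDb: "FinI v D\<beta>" using pair_FinI(3)[OF dat(2) vnn] by (simp add: D\<beta>_def[abs_def])
      have fDa': "FinI v (\<lambda>n. D\<alpha> (n - 1))" by (rule FinI_shift[OF fDa _ vr]) (auto simp: D\<alpha>_def)
      have fDb': "FinI v (\<lambda>n. D\<beta> (n - 1))" by (rule FinI_shift[OF fDb _ vr]) (auto simp: D\<beta>_def)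
      have fP: "FinI v P"
      proof -
        obtain C where C: "\<And>n. w n * (norm (\<alpha>0 n) + norm (\<beta>0 n)) \<le> C"
          using dat(1) unfolding wnorm_inf_finite_def bdd_above_def by auto
        have "v n * P n \<le> C * C" for n
        proof -
          have a: "w n * norm (\<alpha>0 n) \<le> C" using C[of n] wnn[of n] by (smt (verit) mult_left_mono norm_ge_zero distrib_left)
          have b: "w n * norm (\<beta>0 n) \<le> C" using C[of n] wnn[of n] by (smt (verit) mult_left_mono norm_ge_zero distrib_left)
          have C0: "0 \<le> C" using a mult_nonneg_nonneg[OF wnn[of n] norm_ge_zero[of "\<alpha>0 n"]] by linarith
          have "v n * P n = (w n * norm (\<alpha>0 n)) * (w n * norm (\<beta>0 n))" by (simp add: v_def P_def power2_eq_square algebra_simps)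
          also have "\<dots> \<le> C * C" using a b wnn[of n] C0 by (intro mult_mono) auto
          finally show ?thesis .
        qed
        then show ?thesis unfolding FinI_def by blast
      qed
      have fP': "FinI v (\<lambda>n. 4 * B * P n)" by (rule FinI_scale[OF fP]) (use B0 in auto)
      have fF: "FinI v F"
        unfolding F_def by (intro FinI_add fDa' fDa fDb' fDb fP')
      define \<tau>0 where "\<tau>0 = 1 / (2 * (K + 1) * (2 * R\<^sup>2 + 1) * (R\<^sup>2 + 1))"
      have tau0: "\<tau>0 > 0"
      proof -
        have "0 < 2 * (K + 1) * (2 * R\<^sup>2 + 1) * (R\<^sup>2 + 1)" using K0 zero_le_power2[of R]
          by (intro mult_pos_pos) (auto intro: add_nonneg_pos)
        then show ?thesis unfolding \<tau>0_def by simp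
      qed
      have fut: "FinI v (u t)"
      proof (rule time_layer[where \<alpha>="\<lambda>s n. \<alpha> s n" and \<beta>="\<lambda>s n. \<beta> s n" and \<alpha>'="\<lambda>s n. \<alpha>' s n"
            and \<beta>'="\<lambda>s n. \<beta>' s n" and \<alpha>z=\<alpha>0 and \<beta>z=\<beta>0 and u=u and Fin="FinI v" and F=F and K=K
            and \<tau>z=\<tau>0 and tb=t1 and Cu="4 * B"])
        fix a G :: "int \<Rightarrow> real" and \<tau> C
        assume h: "0 \<le> \<tau>" "\<tau> \<le> \<tau>0" "FinI v a" "\<And>n. 0 \<le> a n" "\<And>n. 0 \<le> G n" "\<And>n. G n \<le> C"
          "\<And>n. G n \<le> a n + \<tau> * (F n + K * (G (n - 1) + G n + G (n + 1)))"
        have X0: "0 < (2 * R\<^sup>2 + 1) * (R\<^sup>2 + 1)" using zero_le_power2[of R] by (intro mult_pos_pos) (auto intro: add_nonneg_pos)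
        have nz: "2 * R\<^sup>2 + 1 \<noteq> 0" "R\<^sup>2 + 1 \<noteq> 0" "K + 1 \<noteq> 0" using zero_le_power2[of R] K0 by linarith+
        have "\<tau> * K \<le> \<tau>0 * (K + 1)" using h(1,2) K0 tau0 by (intro mult_mono) auto
        then have "2 * (\<tau> * K) * ((2 * R\<^sup>2 + 1) * (R\<^sup>2 + 1)) \<le> 2 * (\<tau>0 * (K + 1)) * ((2 * R\<^sup>2 + 1) * (R\<^sup>2 + 1))"
          using X0 by (intro mult_right_mono) auto
        also have "\<dots> = (2 * (K + 1) * (2 * R\<^sup>2 + 1) * (R\<^sup>2 + 1)) * \<tau>0" by (simp add: algebra_simps)
        also have "\<dots> = 1" unfolding \<tau>0_def using nz by simp
        finally have sm: "2 * \<tau> * K * (2 * R\<^sup>2 + 1) * (R\<^sup>2 + 1) \<le> 1" by (simp add: algebra_simps)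
        have "FinI (\<lambda>n. (w n)\<^sup>2) G"
          by (rule step_inf[where w=w and R=R and F=F and G=G and a=a and K=K and \<tau>=\<tau>, OF wpos R1 r1 r2 h(1) K0 F0 h(4) h(5) h(6) h(7)])
             (use h(3) fF sm in \<open>simp_all add: v_def[abs_def]\<close>)
        then show "FinI v G" by (simp add: v_def[abs_def])
      next
        fix x G :: "int \<Rightarrow> real"
        assume "FinI v G" "\<And>n. 0 \<le> x n" "\<And>n. x n \<le> G n"
        then show "FinI v x" using FinI_mono vnn by blast
      qed (use tau0 K0 F0 d\<alpha> d\<beta> bd ub Fin0 tI in \<open>auto simp: u_def\<close>)
      then obtain A where A: "\<And>n. v n * u t n \<le> A" unfolding FinI_def by blast
      then show "wnorm_inf_finite (\<lambda>n. (w n)\<^sup>2) (\<lambda>n. \<alpha> t n - \<alpha>0 n) (\<lambda>n. \<beta> t n - \<beta>0 n)"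
        unfolding wnorm_inf_finite_def by (intro bdd_aboveI[where M=A]) (auto simp: v_def u_def)
    qed
  qed
qed

end
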